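(* Let $A:\mathbb{R}^n\to\mathbb{R}^n$ be a linear operator that is GTP (respectively, GSTP) with respect to a totally positive structure $\{K_1,\ldots,K_n\}$. Then the adjoint operator $A^*$ is GTP (respectively, GSTP) with respect to the totally positive structure $\{K_1^*,\ldots,K_n^*\}$.
   Context: A proper cone is a closed convex cone that is pointed and solid. $\wedge^j\mathbb{R}^n$ is the $j$th exterior power of $\mathbb{R}^n$, with inner product $\langle x_1\wedge\cdots\wedge x_j,y_1\wedge\cdots\wedge y_j\rangle=\det(\langle x_k,y_l\rangle)_{k,l=1}^j$; via these inner products dual spaces are identified with the spaces themselves, the adjoint $A^*$ is the transpose, and for a proper cone $K$ its adjoint cone is $K^*=\{x^*:\langle y,x^*\rangle\ge0\ \forall y\in K\}$. $\wedge^jA$ denotes the operator with $(\wedge^jA)(x_1\wedge\cdots\wedge x_j)=Ax_1\wedge\cdots\wedge Ax_j$. $B$ is $K$-nonnegative if $BK\subseteq K$, $K$-positive if $B(K\setminus\{0\})\subseteq\operatorname{int}K$. A totally positive structure is a family $\{K_1,\ldots,K_n\}$ with $K_j\subset\wedge^j\mathbb{R}^n$ proper cones; $A$ is GTP (GSTP) with respect to it if $\wedge^jA$ is $K_j$-nonnegative (resp. $K_j$-positive) for all $j=1,\ldots,n$. *)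

theory Defs
  imports "HOL-Analysis.Analysis"
begin

text \<open>R^n is modelled by vectors
indexed by 0..n-1 and a linear operator by its matrix A :: nat => nat => real
(entry A i k, i,k < n).  The j-th exterior power is modelled in the standard
basis e_I = e_(i1) wedge ... wedge e_(ij), i1 < ... < ij, indexed by the j-subsets I
of {0..n-1}; an element is a function nat set => real vanishing off these
subsets.  The determinantal inner product makes this basis orthonormal, so
the inner product is the coordinate dot product.\<close>

definition subsets :: "nat \<Rightarrow> nat \<Rightarrow> nat set set" where
  "subsets n j = {I. I \<subseteq> {..<n} \<and> card I = j}"

definition wedge_space :: "nat \<Rightarrow> nat \<Rightarrow> (nat set \<Rightarrow> real) set" where
  "wedge_space n j = {x. \<forall>I. I \<notin> subsets n j \<longrightarrow> x I = 0}"

definition winner :: "nat \<Rightarrow> nat \<Rightarrow> (nat set \<Rightarrow> real) \<Rightarrow> (nat set \<Rightarrow> real) \<Rightarrow> real" where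
  "winner n j x y = (\<Sum>I\<in>subsets n j. x I * y I)"

definition wnorm :: "nat \<Rightarrow> nat \<Rightarrow> (nat set \<Rightarrow> real) \<Rightarrow> real" where
  "wnorm n j x = sqrt (winner n j x x)"

definition ldet :: "nat \<Rightarrow> (nat \<Rightarrow> nat \<Rightarrow> real) \<Rightarrow> real" where
  "ldet j M = (\<Sum>p | p permutes {..<j}. of_int (sign p) * (\<Prod>k<j. M k (p k)))"

definition minor :: "(nat \<Rightarrow> nat \<Rightarrow> real) \<Rightarrow> nat set \<Rightarrow> nat set \<Rightarrow> real" where
  "minor A I J = ldet (card I)
     (\<lambda>k l. A (sorted_list_of_set I ! k) (sorted_list_of_set J ! l))"

text \<open>The operator wedge^j A on wedge^j R^n: its matrix in the basis e_I is the
j-th compound matrix (this is exactly the map with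
(wedge^j A)(x1 wedge ... wedge xj) = A x1 wedge ... wedge A xj).\<close>
definition wedge_op :: "nat \<Rightarrow> nat \<Rightarrow> (nat \<Rightarrow> nat \<Rightarrow> real) \<Rightarrow> (nat set \<Rightarrow> real) \<Rightarrow> (nat set \<Rightarrow> real)" where
  "wedge_op n j A x = (\<lambda>I. if I \<in> subsets n j then (\<Sum>J\<in>subsets n j. minor A I J * x J) else 0)"

definition adjoint_mat :: "(nat \<Rightarrow> nat \<Rightarrow> real) \<Rightarrow> (nat \<Rightarrow> nat \<Rightarrow> real)" where
  "adjoint_mat A = (\<lambda>i k. A k i)"

definition winterior :: "nat \<Rightarrow> nat \<Rightarrow> (nat set \<Rightarrow> real) set \<Rightarrow> (nat set \<Rightarrow> real) set" where
  "winterior n j K = {x \<in> K. \<exists>e>0. \<forall>y\<in>wedge_space n j.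
       wnorm n j (\<lambda>I. y I - x I) < e \<longrightarrow> y \<in> K}"

definition proper_cone :: "nat \<Rightarrow> nat \<Rightarrow> (nat set \<Rightarrow> real) set \<Rightarrow> bool" where
  "proper_cone n j K \<longleftrightarrow>
     K \<subseteq> wedge_space n j \<and>
     closed K \<and>
     (\<forall>x\<in>K. \<forall>y\<in>K. (\<lambda>I. x I + y I) \<in> K) \<and>
     (\<forall>x\<in>K. \<forall>c::real. c \<ge> 0 \<longrightarrow> (\<lambda>I. c * x I) \<in> K) \<and>
     (\<forall>x. x \<in> K \<and> (\<lambda>I. - x I) \<in> K \<longrightarrow> x = (\<lambda>_. 0)) \<and>
     winterior n j K \<noteq> {}"

definition adjoint_cone :: "nat \<Rightarrow> nat \<Rightarrow> (nat set \<Rightarrow> real) set \<Rightarrow> (nat set \<Rightarrow> real) set" where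
  "adjoint_cone n j K = {y \<in> wedge_space n j. \<forall>x\<in>K. winner n j x y \<ge> 0}"

definition K_nonnegative :: "((nat set \<Rightarrow> real) \<Rightarrow> (nat set \<Rightarrow> real)) \<Rightarrow> (nat set \<Rightarrow> real) set \<Rightarrow> bool" where
  "K_nonnegative B K \<longleftrightarrow> (\<forall>x\<in>K. B x \<in> K)"

definition K_positive :: "nat \<Rightarrow> nat \<Rightarrow> ((nat set \<Rightarrow> real) \<Rightarrow> (nat set \<Rightarrow> real)) \<Rightarrow> (nat set \<Rightarrow> real) set \<Rightarrow> bool" where
  "K_positive n j B K \<longleftrightarrow> (\<forall>x\<in>K - {\<lambda>_. 0}. B x \<in> winterior n j K)"

definition totally_positive_structure :: "nat \<Rightarrow> (nat \<Rightarrow> (nat set \<Rightarrow> real) set) \<Rightarrow> bool" where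
  "totally_positive_structure n K \<longleftrightarrow> (\<forall>j\<in>{1..n}. proper_cone n j (K j))"

definition GTP :: "nat \<Rightarrow> (nat \<Rightarrow> nat \<Rightarrow> real) \<Rightarrow> (nat \<Rightarrow> (nat set \<Rightarrow> real) set) \<Rightarrow> bool" where
  "GTP n A K \<longleftrightarrow> (\<forall>j\<in>{1..n}. K_nonnegative (wedge_op n j A) (K j))"

definition GSTP :: "nat \<Rightarrow> (nat \<Rightarrow> nat \<Rightarrow> real) \<Rightarrow> (nat \<Rightarrow> (nat set \<Rightarrow> real) set) \<Rightarrow> bool" where
  "GSTP n A K \<longleftrightarrow> (\<forall>j\<in>{1..n}. K_positive n j (wedge_op n j A) (K j))"

end

theory Submission
  imports Defs
begin


lemma ldet_transpose: "ldet j (\<lambda>k l. M l k) = ldet j M"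
proof -
  let ?U = "{..<j::nat}"
  have "of_int (sign (inv p)) * (\<Prod>k<j. M (inv p k) k) = of_int (sign p) * (\<Prod>k<j. M k (p k))"
    if p: "p permutes ?U" for p
  proof -
    have sth: "sign (inv p) = sign p"
      by (metis sign_inverse finite_lessThan p permutation_permutes)
    have pi: "inj_on p ?U" using permutes_inj[OF p] by (blast intro: inj_on_subset)
    have "(\<Prod>k<j. M (inv p k) k) = (\<Prod>k\<in>p ` ?U. M (inv p k) k)"
      using permutes_image[OF p] by simp
    also have "\<dots> = (\<Prod>k\<in>?U. M (inv p (p k)) (p k))"
      by (simp add: prod.reindex[OF pi])
    also have "\<dots> = (\<Prod>k<j. M k (p k))"
      using permutes_inverses(2)[OF p] by simp
    finally show ?thesis using sth by simp
  qed
  then show ?thesis unfolding ldet_def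
    by (subst sum_permutations_inverse) (auto intro: sum.cong)
qed



lemma finite_subsets[simp]: "finite (subsets n j)"
  unfolding subsets_def by (rule finite_subset[of _ "Pow {..<n}"]) auto

lemma minor_adjoint:
  assumes "I \<in> subsets n j" "J \<in> subsets n j"
  shows "minor (adjoint_mat A) I J = minor A J I"
proof -
  have "card I = card J" using assms by (simp add: subsets_def)
  then show ?thesis unfolding minor_def adjoint_mat_def
    using ldet_transpose[of "card J" "\<lambda>k l. A (sorted_list_of_set J ! k) (sorted_list_of_set I ! l)"]
    by simp
qed

lemma winner_adjoint:
  "winner n j x (wedge_op n j (adjoint_mat A) z) = winner n j (wedge_op n j A x) z"
proof -
  have "winner n j x (wedge_op n j (adjoint_mat A) z)
     = (\<Sum>I\<in>subsets n j. \<Sum>J\<in>subsets n j. x I * (minor A J I * z J))"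
    unfolding winner_def wedge_op_def
    by (auto simp: sum_distrib_left minor_adjoint intro!: sum.cong)
  also have "\<dots> = (\<Sum>J\<in>subsets n j. \<Sum>I\<in>subsets n j. x I * (minor A J I * z J))"
    by (rule sum.swap)
  also have "\<dots> = winner n j (wedge_op n j A x) z"
    unfolding winner_def wedge_op_def
    by (auto simp: sum_distrib_right intro!: sum.cong)
  finally show ?thesis .
qed



lemma wnorm_L2: "wnorm n j x = L2_set x (subsets n j)"
  unfolding wnorm_def winner_def L2_set_def by (simp add: power2_eq_square)

lemma winner_sym: "winner n j x y = winner n j y x"
  unfolding winner_def by (simp add: mult.commute)

lemma winner_self: "winner n j x x = (wnorm n j x)^2"
  unfolding wnorm_def winner_def by (simp add: sum_nonneg)

lemma winner_CS: "\<bar>winner n j x y\<bar> \<le> wnorm n j x * wnorm n j y"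
proof -
  have "\<bar>winner n j x y\<bar> \<le> (\<Sum>I\<in>subsets n j. \<bar>x I\<bar> * \<bar>y I\<bar>)"
    unfolding winner_def by (metis (no_types, lifting) abs_mult sum.cong sum_abs)
  also have "\<dots> \<le> wnorm n j x * wnorm n j y" unfolding wnorm_L2 by (rule L2_set_mult_ineq)
  finally show ?thesis .
qed

lemma wnorm_nonneg: "wnorm n j x \<ge> 0" by (simp add: wnorm_L2)

lemma wnorm_triangle: "wnorm n j (\<lambda>I. x I + y I) \<le> wnorm n j x + wnorm n j y"
  unfolding wnorm_L2 by (rule L2_set_triangle_ineq)

lemma wnorm_coord: "I \<in> subsets n j \<Longrightarrow> \<bar>x I\<bar> \<le> wnorm n j x"
proof -
  assume I: "I \<in> subsets n j"
  have "\<bar>x I\<bar> \<le> L2_set (\<lambda>I. \<bar>x I\<bar>) (subsets n j)" by (rule member_le_L2_set) (use I in auto)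
  also have "\<dots> = wnorm n j x" unfolding wnorm_L2 L2_set_def by simp
  finally show ?thesis .
qed

lemma wnorm_scale: "wnorm n j (\<lambda>I. c * x I) = \<bar>c\<bar> * wnorm n j x"
  unfolding wnorm_L2 L2_set_def
  by (simp add: power_mult_distrib sum_distrib_left[symmetric] real_sqrt_mult)

lemma wnorm_zero_iff: "x \<in> wedge_space n j \<Longrightarrow> wnorm n j x = 0 \<longleftrightarrow> x = (\<lambda>_. 0)"
  unfolding wnorm_L2 wedge_space_def
  by (subst L2_set_eq_0_iff) (auto simp: fun_eq_iff)

lemma winner_lin_left: "winner n j (\<lambda>I. a * x I + b * y I) z = a * winner n j x z + b * winner n j y z"
  unfolding winner_def by (simp add: algebra_simps sum.distrib sum_distrib_left)

lemma winner_lin_right: "winner n j z (\<lambda>I. a * x I + b * y I) = a * winner n j z x + b * winner n j z y"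
  unfolding winner_def by (simp add: algebra_simps sum.distrib sum_distrib_left)

lemma cont_winner[continuous_intros]: "continuous_on U (\<lambda>x. winner n j x y)"
  unfolding winner_def
  by (intro continuous_intros continuous_on_subset[OF continuous_on_product_coordinates]) auto

lemma cont_wnorm[continuous_intros]: "continuous_on U (\<lambda>x. wnorm n j x)"
  unfolding wnorm_def winner_def
  by (intro continuous_intros continuous_on_subset[OF continuous_on_product_coordinates]) auto

lemma closed_wedge_space: "closed (wedge_space n j)"
proof -
  have "wedge_space n j = (\<Inter>I\<in>-subsets n j. {x. x I = 0})"
    unfolding wedge_space_def by auto
  moreover have "closed {x::nat set \<Rightarrow> real. x I = 0}" for I
    by (rule closed_Collect_eq) (auto intro: continuous_on_product_coordinates)
  ultimately show ?thesis by auto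
qed

lemma compact_bounded:
  assumes "closed F" "F \<subseteq> wedge_space n j"
  shows "compact (F \<inter> {x. wnorm n j x \<le> r})"
proof -
  define B where "B = PiE UNIV (\<lambda>I. if I \<in> subsets n j then {-r..r} else {0::real})"
  have "compactin (product_topology (\<lambda>_. euclidean) UNIV) B"
    unfolding B_def compactin_PiE by auto
  then have cB: "compact B" by (simp add: euclidean_product_topology)
  have "F \<inter> {x. wnorm n j x \<le> r} = B \<inter> (F \<inter> {x. wnorm n j x \<le> r})"
  proof -
    have "x \<in> B" if "x \<in> F" "wnorm n j x \<le> r" for x
    proof -
      have "x I \<in> (if I \<in> subsets n j then {-r..r} else {0})" for I
        using that assms(2) wnorm_coord[of I n j x] unfolding wedge_space_def by auto
      then show ?thesis unfolding B_def by auto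
    qed
    then show ?thesis by auto
  qed
  moreover have "closed (F \<inter> {x. wnorm n j x \<le> r})"
    by (intro closed_Int assms closed_Collect_le continuous_intros)
  ultimately show ?thesis using cB by (metis compact_Int_closed)
qed



lemma real_small_t:
  fixes a b :: real
  assumes "b \<ge> 0" "\<And>t. 0 < t \<Longrightarrow> t < 1 \<Longrightarrow> 0 \<le> 2*t*a + t^2*b"
  shows "0 \<le> a"
proof (rule ccontr)
  assume "\<not> 0 \<le> a"
  then have a: "a < 0" by simp
  define t where "t = min (1/2) (-a/(b+1))"
  have "-a/(b+1) > 0" using a assms(1) by (intro divide_pos_pos) auto
  then have t0: "0 < t" "t < 1" by (auto simp: t_def)
  have "t \<le> -a/(b+1)" unfolding t_def by simp
  then have "t * (b+1) \<le> (-a/(b+1)) * (b+1)" using assms(1) by (intro mult_right_mono) auto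
  then have "t * (b+1) \<le> -a" using assms(1) by simp
  then have "t * (2*a + t*(b+1)) \<le> t * a" using t0
    by (smt (verit) mult_left_mono)
  moreover have "t * a < 0" using t0 a by (simp add: mult_pos_neg)
  moreover have "2*t*a + t^2*b \<le> t * (2*a + t*(b+1))" using t0
    by (simp add: power2_eq_square algebra_simps)
  ultimately show False using assms(2)[OF t0] by linarith
qed

lemma winner_expand:
  "winner n j (\<lambda>I. u I + t * v I) (\<lambda>I. u I + t * v I)
     = winner n j u u + 2*t*winner n j v u + t^2*winner n j v v"
  unfolding winner_def
  by (simp add: algebra_simps power2_eq_square sum.distrib sum_distrib_left)

lemma zero_in_cone: "proper_cone n j K \<Longrightarrow> (\<lambda>_. 0) \<in> K"
proof -
  assume K: "proper_cone n j K"
  then obtain x where "x \<in> K" unfolding proper_cone_def winterior_def by blast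
  then have "(\<lambda>I. 0 * x I) \<in> K" using K unfolding proper_cone_def by blast
  then show ?thesis by simp
qed

lemma nearest:
  assumes K: "proper_cone n j K" and a: "a \<in> wedge_space n j"
  shows "\<exists>q\<in>K. \<forall>k\<in>K. wnorm n j (\<lambda>I. q I - a I) \<le> wnorm n j (\<lambda>I. k I - a I)"
proof -
  define d where "d k = wnorm n j (\<lambda>I. k I - a I)" for k
  define C where "C = K \<inter> {x. wnorm n j x \<le> 2 * wnorm n j a}"
  have Kc: "closed K" "K \<subseteq> wedge_space n j" using K unfolding proper_cone_def by auto
  have z: "(\<lambda>_. 0) \<in> K" using zero_in_cone[OF K] .
  have cC: "compact C" unfolding C_def by (rule compact_bounded[OF Kc])
  have z0C: "(\<lambda>_. 0) \<in> C" unfolding C_def using z wnorm_nonneg[of n j a] by (simp add: wnorm_def winner_def)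
  then have nC: "C \<noteq> {}" by blast
  have cd: "continuous_on C d" unfolding d_def wnorm_def winner_def
    by (intro continuous_intros continuous_on_subset[OF continuous_on_product_coordinates]) auto
  obtain q where q: "q \<in> C" "\<forall>y\<in>C. d q \<le> d y"
    using continuous_attains_inf[OF cC nC cd] by blast
  have d0: "d (\<lambda>_. 0) = wnorm n j a"
    unfolding d_def using wnorm_scale[of n j "-1" a] by simp
  have "d q \<le> d k" if k: "k \<in> K" for k
  proof (cases "wnorm n j k \<le> 2 * wnorm n j a")
    case True then show ?thesis using q k unfolding C_def by auto
  next
    case False
    have "wnorm n j k \<le> d k + wnorm n j a"
      unfolding d_def using wnorm_triangle[of n j "\<lambda>I. k I - a I" a] by simp
    then have "d k > wnorm n j a" using False by linarith
    moreover have "d q \<le> d (\<lambda>_. 0)" using q(2) z0C by blast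
    ultimately show ?thesis using d0 by linarith
  qed
  then show ?thesis using q(1) unfolding C_def d_def by auto
qed

lemma separate_point:
  assumes K: "proper_cone n j K" and x: "x \<in> K" "x \<noteq> (\<lambda>_. 0)"
  shows "\<exists>r\<in>adjoint_cone n j K. winner n j x r > 0"
proof -
  have KW: "K \<subseteq> wedge_space n j" using K unfolding proper_cone_def by auto
  have add: "\<And>u v. u \<in> K \<Longrightarrow> v \<in> K \<Longrightarrow> (\<lambda>I. u I + v I) \<in> K"
    and sc: "\<And>u c. u \<in> K \<Longrightarrow> c \<ge> 0 \<Longrightarrow> (\<lambda>I. c * u I) \<in> K"
    and pt: "\<And>u. u \<in> K \<Longrightarrow> (\<lambda>I. - u I) \<in> K \<Longrightarrow> u = (\<lambda>_. 0)"
    using K unfolding proper_cone_def by blast+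
  have xW: "x \<in> wedge_space n j" using x KW by auto
  have aW: "(\<lambda>I. - x I) \<in> wedge_space n j" using xW unfolding wedge_space_def by auto
  obtain q where q: "q \<in> K" "\<forall>k\<in>K. wnorm n j (\<lambda>I. q I - - x I) \<le> wnorm n j (\<lambda>I. k I - - x I)"
    using nearest[OF K aW] by blast
  define r where "r = (\<lambda>I. q I + x I)"
  define g where "g k = winner n j (\<lambda>I. k I + x I) (\<lambda>I. k I + x I)" for k
  have gq: "g q \<le> g k" if "k \<in> K" for k
  proof -
    have "wnorm n j (\<lambda>I. q I + x I) \<le> wnorm n j (\<lambda>I. k I + x I)" using q that by simp
    then show ?thesis unfolding g_def winner_self
      by (intro power_mono) (auto simp: wnorm_nonneg)
  qed
  have kr: "winner n j k r \<ge> 0" if k: "k \<in> K" for k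
  proof (rule real_small_t[of "winner n j k k"])
    show "0 \<le> winner n j k k" by (simp add: winner_self)
    fix t :: real assume t: "0 < t" "t < 1"
    have "(\<lambda>I. q I + t * k I) \<in> K" using add[OF q(1) sc[OF k]] t by simp
    then have "g q \<le> g (\<lambda>I. q I + t * k I)" by (rule gq)
    moreover have "g (\<lambda>I. q I + t * k I) = winner n j (\<lambda>I. r I + t * k I) (\<lambda>I. r I + t * k I)"
      unfolding g_def r_def by (simp add: algebra_simps)
    moreover have "g q = winner n j r r" unfolding g_def r_def ..
    ultimately show "0 \<le> 2 * t * winner n j k r + t\<^sup>2 * winner n j k k"
      unfolding winner_expand by simp
  qed
  have qr: "winner n j (\<lambda>I. - q I) r \<ge> 0"
  proof (rule real_small_t[of "winner n j (\<lambda>I. - q I) (\<lambda>I. - q I)"])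
    show "0 \<le> winner n j (\<lambda>I. - q I) (\<lambda>I. - q I)" by (simp add: winner_self)
    fix t :: real assume t: "0 < t" "t < 1"
    have "(\<lambda>I. (1 - t) * q I) \<in> K" using sc[OF q(1)] t by simp
    then have "g q \<le> g (\<lambda>I. (1 - t) * q I)" by (rule gq)
    moreover have "g (\<lambda>I. (1-t) * q I) = winner n j (\<lambda>I. r I + t * - q I) (\<lambda>I. r I + t * - q I)"
      unfolding g_def r_def by (simp add: algebra_simps)
    moreover have "g q = winner n j r r" unfolding g_def r_def ..
    ultimately show "0 \<le> 2 * t * winner n j (\<lambda>I. - q I) r + t\<^sup>2 * winner n j (\<lambda>I. - q I) (\<lambda>I. - q I)"
      unfolding winner_expand by simp
  qed
  have rW: "r \<in> wedge_space n j" using q(1) KW xW unfolding r_def wedge_space_def by auto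
  have "r \<noteq> (\<lambda>_. 0)"
  proof
    assume "r = (\<lambda>_. 0)"
    then have "q = (\<lambda>I. - x I)" unfolding r_def by (simp add: fun_eq_iff eq_neg_iff_add_eq_0)
    then show False using pt[OF x(1)] q(1) x(2) by simp
  qed
  then have "wnorm n j r \<noteq> 0" using wnorm_zero_iff[OF rW] by simp
  then have rr: "winner n j r r > 0" by (simp add: winner_self)
  have "winner n j x r = winner n j r r + winner n j (\<lambda>I. - q I) r"
    unfolding winner_def r_def sum.distrib[symmetric] by (rule sum.cong) (simp_all add: algebra_simps)
  then have "winner n j x r > 0" using rr qr by linarith
  moreover have "r \<in> adjoint_cone n j K" unfolding adjoint_cone_def using rW kr by auto
  ultimately show ?thesis by blast
qed



lemma cont_winner2[continuous_intros]: "continuous_on U (\<lambda>y. winner n j x y)"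
  unfolding winner_def
  by (intro continuous_intros continuous_on_subset[OF continuous_on_product_coordinates]) auto

lemma winner_zero[simp]: "winner n j (\<lambda>_. 0) y = 0" "winner n j y (\<lambda>_. 0) = 0"
  unfolding winner_def by simp_all

lemma winner_W_zero: "x \<in> wedge_space n j \<Longrightarrow> wnorm n j x = 0 \<Longrightarrow> winner n j x y = 0"
  using wnorm_zero_iff by auto

lemma pos_bound:
  assumes K: "proper_cone n j K"
    and pos: "\<And>x. x \<in> K \<Longrightarrow> wnorm n j x = 1 \<Longrightarrow> winner n j x y > 0"
  shows "\<exists>c>0. \<forall>x\<in>K. c * wnorm n j x \<le> winner n j x y"
proof -
  have Kc: "closed K" "K \<subseteq> wedge_space n j" using K unfolding proper_cone_def by auto
  have sc: "\<And>u c. u \<in> K \<Longrightarrow> c \<ge> 0 \<Longrightarrow> (\<lambda>I. c * u I) \<in> K"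
    using K unfolding proper_cone_def by blast
  define \<Sigma> where "\<Sigma> = (K \<inter> {x. wnorm n j x \<le> 1}) \<inter> {x. wnorm n j x = 1}"
  have cS: "compact \<Sigma>" unfolding \<Sigma>_def
    by (intro compact_Int_closed compact_bounded Kc closed_Collect_eq continuous_intros)
  have norm1: "(\<lambda>I. (1 / wnorm n j x) * x I) \<in> \<Sigma>" if "x \<in> K" "wnorm n j x > 0" for x
  proof -
    have "wnorm n j (\<lambda>I. (1 / wnorm n j x) * x I) = 1"
      using that wnorm_scale[of n j "1 / wnorm n j x" x] by simp
    then show ?thesis using sc[OF that(1), of "1 / wnorm n j x"] that unfolding \<Sigma>_def by auto
  qed
  have scal: "winner n j (\<lambda>I. (1 / wnorm n j x) * x I) y = (1 / wnorm n j x) * winner n j x y" for x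
    unfolding winner_def by (simp add: sum_distrib_left algebra_simps)
  show ?thesis
  proof (cases "\<Sigma> = {}")
    case True
    have "1 * wnorm n j x \<le> winner n j x y" if "x \<in> K" for x
    proof -
      have "wnorm n j x = 0" using norm1[OF that] True wnorm_nonneg[of n j x] by force
      then show ?thesis using winner_W_zero[of x n j y] that Kc by auto
    qed
    then show ?thesis by (intro exI[of _ 1]) auto
  next
    case False
    have cf: "continuous_on \<Sigma> (\<lambda>x. winner n j x y)" by (rule cont_winner)
    obtain x0 where x0: "x0 \<in> \<Sigma>" "\<forall>x\<in>\<Sigma>. winner n j x0 y \<le> winner n j x y"
      using continuous_attains_inf[OF cS False cf] by blast
    have c0: "winner n j x0 y > 0" using x0(1) pos unfolding \<Sigma>_def by auto
    have "winner n j x0 y * wnorm n j x \<le> winner n j x y" if x: "x \<in> K" for x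
    proof (cases "wnorm n j x = 0")
      case True then show ?thesis using winner_W_zero[of x n j y] x Kc by auto
    next
      case False
      then have w: "wnorm n j x > 0" using wnorm_nonneg[of n j x] by linarith
      have "winner n j x0 y \<le> (1 / wnorm n j x) * winner n j x y"
        using x0(2) norm1[OF x w] scal[of x] by metis
      then show ?thesis using w by (simp add: field_simps)
    qed
    then show ?thesis using c0 by (intro exI[of _ "winner n j x0 y"]) (auto simp: mult.commute)
  qed
qed

lemma interior_dual:
  assumes y: "y \<in> wedge_space n j" and c: "c > 0"
    and b: "\<forall>x\<in>K. c * wnorm n j x \<le> winner n j x y"
  shows "y \<in> winterior n j (adjoint_cone n j K)"
proof -
  have "z \<in> adjoint_cone n j K" if z: "z \<in> wedge_space n j" "wnorm n j (\<lambda>I. z I - y I) < c" for z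
  proof -
    have "winner n j x z \<ge> 0" if x: "x \<in> K" for x
    proof -
      have e: "winner n j x z = winner n j x y + winner n j x (\<lambda>I. z I - y I)"
        unfolding winner_def sum.distrib[symmetric] by (rule sum.cong) (simp_all add: algebra_simps)
      have "\<bar>winner n j x (\<lambda>I. z I - y I)\<bar> \<le> wnorm n j x * wnorm n j (\<lambda>I. z I - y I)"
        by (rule winner_CS)
      also have "\<dots> \<le> wnorm n j x * c" using z(2) wnorm_nonneg[of n j x]
        by (intro mult_left_mono) auto
      finally show ?thesis using e b x by (auto simp: mult.commute)
    qed
    then show ?thesis using z unfolding adjoint_cone_def by auto
  qed
  moreover have "y \<in> adjoint_cone n j K"
  proof -
    have "winner n j x y \<ge> 0" if "x \<in> K" for x
      using b that c wnorm_nonneg[of n j x] by (meson less_imp_le mult_nonneg_nonneg order_trans)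
    then show ?thesis unfolding adjoint_cone_def using y by auto
  qed
  ultimately show ?thesis unfolding winterior_def using c by blast
qed

lemma int_pos:
  assumes K: "proper_cone n j K" and w: "w \<in> winterior n j K"
    and z: "z \<in> adjoint_cone n j K" "z \<noteq> (\<lambda>_. 0)"
  shows "winner n j w z > 0"
proof -
  have KW: "K \<subseteq> wedge_space n j" using K unfolding proper_cone_def by auto
  obtain e where e: "e > 0" "\<forall>y\<in>wedge_space n j. wnorm n j (\<lambda>I. y I - w I) < e \<longrightarrow> y \<in> K"
    and wK: "w \<in> K" using w unfolding winterior_def by blast
  have zW: "z \<in> wedge_space n j" using z unfolding adjoint_cone_def by auto
  have nz: "wnorm n j z > 0" using wnorm_zero_iff[OF zW] z(2) wnorm_nonneg[of n j z] by linarith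
  define d where "d = e / (2 * wnorm n j z)"
  have d: "d > 0" using e nz unfolding d_def by simp
  define w' where "w' = (\<lambda>I. w I + (- d) * z I)"
  have "w' \<in> wedge_space n j" using wK KW zW unfolding w'_def wedge_space_def by auto
  moreover have "wnorm n j (\<lambda>I. w' I - w I) < e"
  proof -
    have "wnorm n j (\<lambda>I. w' I - w I) = d * wnorm n j z"
      unfolding w'_def using wnorm_scale[of n j "-d" z] d by simp
    also have "\<dots> = e / 2" using nz unfolding d_def by simp
    finally show ?thesis using e by simp
  qed
  ultimately have "w' \<in> K" using e by blast
  then have "winner n j w' z \<ge> 0" using z unfolding adjoint_cone_def by auto
  moreover have "winner n j w' z = winner n j w z - d * winner n j z z"
    unfolding w'_def winner_def by (simp add: algebra_simps sum.distrib sum_distrib_left sum_subtractf)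
  moreover have "winner n j z z > 0" using nz by (simp add: winner_self)
  ultimately show ?thesis using d by (smt (verit) mult_pos_pos)
qed



lemma dual_proper:
  assumes K: "proper_cone n j K"
  shows "proper_cone n j (adjoint_cone n j K)"
proof -
  let ?D = "adjoint_cone n j K"
  have KW: "K \<subseteq> wedge_space n j" using K unfolding proper_cone_def by auto
  have sub: "?D \<subseteq> wedge_space n j" unfolding adjoint_cone_def by auto
  have cl: "closed ?D"
  proof -
    have "?D = wedge_space n j \<inter> (\<Inter>x\<in>K. {y. 0 \<le> winner n j x y})"
      unfolding adjoint_cone_def by auto
    moreover have "closed {y. 0 \<le> winner n j x y}" for x
      by (intro closed_Collect_le continuous_intros)
    ultimately show ?thesis using closed_wedge_space by (metis closed_Int closed_INT)
  qed
  have addc: "\<forall>x\<in>?D. \<forall>y\<in>?D. (\<lambda>I. x I + y I) \<in> ?D"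
  proof (intro ballI)
    fix x y assume "x \<in> ?D" "y \<in> ?D"
    then show "(\<lambda>I. x I + y I) \<in> ?D" unfolding adjoint_cone_def wedge_space_def
      using winner_lin_right[of n j _ 1 x 1 y] by (auto intro: add_nonneg_nonneg)
  qed
  have scc: "\<forall>x\<in>?D. \<forall>c::real. c \<ge> 0 \<longrightarrow> (\<lambda>I. c * x I) \<in> ?D"
  proof (intro ballI allI impI)
    fix x and c :: real assume "x \<in> ?D" "c \<ge> 0"
    then show "(\<lambda>I. c * x I) \<in> ?D" unfolding adjoint_cone_def wedge_space_def
      using winner_lin_right[of n j _ c x 0 x] by auto
  qed
  have pt: "\<forall>y. y \<in> ?D \<and> (\<lambda>I. - y I) \<in> ?D \<longrightarrow> y = (\<lambda>_. 0)"
  proof (intro allI impI)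
    fix y assume a: "y \<in> ?D \<and> (\<lambda>I. - y I) \<in> ?D"
    have yW: "y \<in> wedge_space n j" using a sub by auto
    have zero: "winner n j x y = 0" if "x \<in> K" for x
    proof -
      have "winner n j x (\<lambda>I. - y I) = - winner n j x y"
        unfolding winner_def by (simp add: sum_negf)
      then show ?thesis using a that unfolding adjoint_cone_def by force
    qed
    obtain z e where z: "z \<in> K" "e > 0" "\<forall>u\<in>wedge_space n j. wnorm n j (\<lambda>I. u I - z I) < e \<longrightarrow> u \<in> K"
      using K unfolding proper_cone_def winterior_def by blast
    have "y I = 0" for I
    proof (cases "I \<in> subsets n j")
      case False then show ?thesis using yW unfolding wedge_space_def by auto
    next
      case True
      define \<delta> where "\<delta> = (\<lambda>J. if J = I then 1 else (0::real))"
      define z' where "z' = (\<lambda>J. z J + (e/2) * \<delta> J)"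
      have "wnorm n j \<delta> = 1"
      proof -
        have "(\<Sum>J\<in>subsets n j. \<delta> J * \<delta> J) = 1"
        proof -
          have "(\<Sum>J\<in>subsets n j. \<delta> J * \<delta> J) = (\<Sum>J\<in>subsets n j. if J = I then 1 else 0)"
            unfolding \<delta>_def by (rule sum.cong) auto
          then show ?thesis using True by simp
        qed
        then show ?thesis unfolding wnorm_def winner_def by simp
      qed
      then have "wnorm n j (\<lambda>J. z' J - z J) = e/2"
        unfolding z'_def using wnorm_scale[of n j "e/2" \<delta>] z(2) by simp
      moreover have "z' \<in> wedge_space n j"
        using z(1) KW True unfolding z'_def \<delta>_def wedge_space_def by auto
      ultimately have "z' \<in> K" using z by auto
      then have "winner n j z' y = 0" by (rule zero)
      moreover have "winner n j z' y = winner n j z y + (e/2) * winner n j \<delta> y"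
        unfolding z'_def winner_def by (simp add: algebra_simps sum.distrib sum_distrib_left)
      moreover have "winner n j \<delta> y = y I"
      proof -
        have "winner n j \<delta> y = (\<Sum>J\<in>subsets n j. if J = I then y J else 0)"
          unfolding winner_def \<delta>_def by (rule sum.cong) auto
        then show ?thesis using True by simp
      qed
      ultimately show ?thesis using zero[OF z(1)] z(2) by simp
    qed
    then show "y = (\<lambda>_. 0)" by auto
  qed
  have solid: "winterior n j ?D \<noteq> {}"
  proof -
    have KC: "closed K" using K unfolding proper_cone_def by auto
    define \<Sigma> where "\<Sigma> = (K \<inter> {x. wnorm n j x \<le> 1}) \<inter> {x. wnorm n j x = 1}"
    have cS: "compact \<Sigma>" unfolding \<Sigma>_def
      by (intro compact_Int_closed compact_bounded KC KW closed_Collect_eq continuous_intros)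
    have cover: "\<Sigma> \<subseteq> (\<Union>r\<in>?D. {x. winner n j x r > 0})"
    proof
      fix x assume x: "x \<in> \<Sigma>"
      then have "x \<in> K" "x \<noteq> (\<lambda>_. 0)" unfolding \<Sigma>_def by (auto simp: wnorm_def winner_def)
      then show "x \<in> (\<Union>r\<in>?D. {x. winner n j x r > 0})" using separate_point[OF K] by blast
    qed
    obtain F where F: "F \<subseteq> ?D" "finite F" "\<Sigma> \<subseteq> (\<Union>r\<in>F. {x. winner n j x r > 0})"
      by (rule compactE_image[OF cS _ cover]) (auto intro!: open_Collect_less continuous_intros)
    define y where "y = (\<lambda>I. \<Sum>r\<in>F. r I)"
    have yW: "y \<in> wedge_space n j" using F(1) sub unfolding y_def wedge_space_def
      by (auto intro!: sum.neutral)
    have ysum: "winner n j x y = (\<Sum>r\<in>F. winner n j x r)" for x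
      unfolding y_def winner_def sum_distrib_left by (rule sum.swap)
    have "winner n j x y > 0" if "x \<in> K" "wnorm n j x = 1" for x
    proof -
      have "x \<in> \<Sigma>" using that unfolding \<Sigma>_def by auto
      then obtain r where r: "r \<in> F" "winner n j x r > 0" using F(3) by auto
      have "\<forall>r\<in>F. winner n j x r \<ge> 0" using F(1) that(1) unfolding adjoint_cone_def by auto
      then show ?thesis unfolding ysum using sum_pos2[OF F(2) r(1), of "winner n j x"] r(2) by blast
    qed
    then obtain c where "c > 0" "\<forall>x\<in>K. c * wnorm n j x \<le> winner n j x y"
      using pos_bound[OF K] by blast
    then have "y \<in> winterior n j ?D" using interior_dual[OF yW] by blast
    then show ?thesis by blast
  qed
  show ?thesis unfolding proper_cone_def using sub cl addc scc pt solid by blast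
qed

theorem proposition14:
  fixes n :: nat and A :: "nat \<Rightarrow> nat \<Rightarrow> real" and K :: "nat \<Rightarrow> (nat set \<Rightarrow> real) set"
  assumes "totally_positive_structure n K"
  shows "totally_positive_structure n (\<lambda>j. adjoint_cone n j (K j))
    \<and> (GTP n A K \<longrightarrow> GTP n (adjoint_mat A) (\<lambda>j. adjoint_cone n j (K j)))
    \<and> (GSTP n A K \<longrightarrow> GSTP n (adjoint_mat A) (\<lambda>j. adjoint_cone n j (K j)))"
proof (intro conjI impI)
  have P: "\<And>j. j \<in> {1..n} \<Longrightarrow> proper_cone n j (K j)"
    using assms unfolding totally_positive_structure_def by auto
  have opW: "wedge_op n j B z \<in> wedge_space n j" for j B z
    unfolding wedge_op_def wedge_space_def by auto
  show "totally_positive_structure n (\<lambda>j. adjoint_cone n j (K j))"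
    unfolding totally_positive_structure_def using P dual_proper by blast
  show "GTP n (adjoint_mat A) (\<lambda>j. adjoint_cone n j (K j))" if G: "GTP n A K"
    unfolding GTP_def K_nonnegative_def
  proof (intro ballI)
    fix j z assume j: "j \<in> {1..n}" and z: "z \<in> adjoint_cone n j (K j)"
    have "winner n j x (wedge_op n j (adjoint_mat A) z) \<ge> 0" if x: "x \<in> K j" for x
    proof -
      have "wedge_op n j A x \<in> K j" using G j x unfolding GTP_def K_nonnegative_def by auto
      then show ?thesis using z unfolding winner_adjoint adjoint_cone_def by auto
    qed
    then show "wedge_op n j (adjoint_mat A) z \<in> adjoint_cone n j (K j)"
      unfolding adjoint_cone_def using opW by auto
  qed
  show "GSTP n (adjoint_mat A) (\<lambda>j. adjoint_cone n j (K j))" if G: "GSTP n A K"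
    unfolding GSTP_def K_positive_def
  proof (intro ballI)
    fix j z assume j: "j \<in> {1..n}" and z: "z \<in> adjoint_cone n j (K j) - {\<lambda>_. 0}"
    have "winner n j x (wedge_op n j (adjoint_mat A) z) > 0"
      if x: "x \<in> K j" "wnorm n j x = 1" for x
    proof -
      have "x \<noteq> (\<lambda>_. 0)" using x(2) by (auto simp: wnorm_def winner_def)
      then have "wedge_op n j A x \<in> winterior n j (K j)"
        using G j x(1) unfolding GSTP_def K_positive_def by auto
      then show ?thesis unfolding winner_adjoint using int_pos[OF P[OF j]] z by auto
    qed
    then obtain c where "c > 0" "\<forall>x\<in>K j. c * wnorm n j x \<le> winner n j x (wedge_op n j (adjoint_mat A) z)"
      using pos_bound[OF P[OF j]] by blast
    then show "wedge_op n j (adjoint_mat A) z \<in> winterior n j (adjoint_cone n j (K j))"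
      using interior_dual[OF opW] by blast
  qed
qed

end
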